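(* Let $D$ be a division algebra and $S$ a ring extension of $D$. Assume that elements $f_1,\ldots,f_d\in S$ are automorphic over $D$ and left linearly independent over $D$. Then $f=f_1+\cdots+f_d$ is automorphic over $D$ if and only if there is a single automorphism $\pi\in\mathrm{Aut}(D)$ such that $f,f_1,\ldots,f_d$ are all automorphic over $D$ with respect to $\pi$.
   Context: An element $a$ of a ring $S\supseteq D$ is automorphic over $D$ with respect to $\pi\in\mathrm{Aut}(D)$ if $ab=\pi(b)a$ for all $b\in D$; it is automorphic over $D$ if it is automorphic with respect to some automorphism of $D$. *)

theory Defs
  imports Main
begin

text \<open>The ambient ring S is a type of class ring_1; the division algebra D is a subset
  of S that is a (nontrivial) division subring.\<close>

definition division_subring :: "'a::ring_1 set \<Rightarrow> bool" where
  "division_subring D \<longleftrightarrow> 0 \<in> D \<and> 1 \<in> D \<and> (0::'a) \<noteq> 1 \<and>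
     (\<forall>x\<in>D. \<forall>y\<in>D. x + y \<in> D \<and> x * y \<in> D \<and> - x \<in> D) \<and>
     (\<forall>x\<in>D. x \<noteq> 0 \<longrightarrow> (\<exists>y\<in>D. x * y = 1 \<and> y * x = 1))"

text \<open>Ring automorphisms of D (as maps on D; values outside D are irrelevant).\<close>

definition ring_aut_on :: "'a::ring_1 set \<Rightarrow> ('a \<Rightarrow> 'a) \<Rightarrow> bool" where
  "ring_aut_on D \<pi> \<longleftrightarrow> bij_betw \<pi> D D \<and> \<pi> 1 = 1 \<and>
     (\<forall>x\<in>D. \<forall>y\<in>D. \<pi> (x + y) = \<pi> x + \<pi> y \<and> \<pi> (x * y) = \<pi> x * \<pi> y)"

definition automorphic_wrt :: "'a::ring_1 set \<Rightarrow> ('a \<Rightarrow> 'a) \<Rightarrow> 'a \<Rightarrow> bool" where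
  "automorphic_wrt D \<pi> a \<longleftrightarrow> (\<forall>b\<in>D. a * b = \<pi> b * a)"

definition automorphic :: "'a::ring_1 set \<Rightarrow> 'a \<Rightarrow> bool" where
  "automorphic D a \<longleftrightarrow> (\<exists>\<pi>. ring_aut_on D \<pi> \<and> automorphic_wrt D \<pi> a)"

definition left_lin_indep :: "'a::ring_1 set \<Rightarrow> (nat \<Rightarrow> 'a) \<Rightarrow> nat \<Rightarrow> bool" where
  "left_lin_indep D f d \<longleftrightarrow>
     (\<forall>c. (\<forall>i<d. c i \<in> D) \<longrightarrow> (\<Sum>i<d. c i * f i) = 0 \<longrightarrow> (\<forall>i<d. c i = 0))"

end

theory Submission
  imports Defs
begin

theorem lemma5p5:
  fixes D :: "'a::ring_1 set" and f :: "nat \<Rightarrow> 'a" and d :: nat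
  assumes "division_subring D"
    and "\<forall>i<d. automorphic D (f i)"
    and "left_lin_indep D f d"
  shows "automorphic D (\<Sum>i<d. f i) \<longleftrightarrow>
         (\<exists>\<pi>. ring_aut_on D \<pi> \<and> automorphic_wrt D \<pi> (\<Sum>i<d. f i) \<and>
              (\<forall>i<d. automorphic_wrt D \<pi> (f i)))"
proof
  assume "automorphic D (\<Sum>i<d. f i)"
  then obtain \<pi> where pa: "ring_aut_on D \<pi>" and pw: "automorphic_wrt D \<pi> (\<Sum>i<d. f i)"
    unfolding automorphic_def by blast
  have "\<forall>i<d. \<exists>p. ring_aut_on D p \<and> automorphic_wrt D p (f i)"
    using assms(2) unfolding automorphic_def by blast
  then obtain P where P: "\<And>i. i < d \<Longrightarrow> ring_aut_on D (P i) \<and> automorphic_wrt D (P i) (f i)"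
    by metis
  have inD: "\<And>p x. ring_aut_on D p \<Longrightarrow> x \<in> D \<Longrightarrow> p x \<in> D"
    unfolding ring_aut_on_def bij_betw_def by blast
  have minus: "\<And>x y. x \<in> D \<Longrightarrow> y \<in> D \<Longrightarrow> x - y \<in> D"
  proof -
    fix x y :: 'a assume "x \<in> D" "y \<in> D"
    then have "- y \<in> D" "\<And>u v. u \<in> D \<Longrightarrow> v \<in> D \<Longrightarrow> u + v \<in> D"
      using assms(1) unfolding division_subring_def by blast+
    then have "x + - y \<in> D" using \<open>x \<in> D\<close> by blast
    then show "x - y \<in> D" by simp
  qed
  have eq: "P i b = \<pi> b" if i: "i < d" and b: "b \<in> D" for i b
  proof -
    have "(\<Sum>i<d. f i) * b = \<pi> b * (\<Sum>i<d. f i)"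
      using pw b unfolding automorphic_wrt_def by blast
    also have "\<dots> = (\<Sum>i<d. \<pi> b * f i)" by (simp add: sum_distrib_left)
    finally have e1: "(\<Sum>i<d. f i * b) = (\<Sum>i<d. \<pi> b * f i)" by (simp add: sum_distrib_right)
    have "(\<Sum>i<d. f i * b) = (\<Sum>i<d. P i b * f i)"
      using P b unfolding automorphic_wrt_def by (intro sum.cong) auto
    with e1 have "(\<Sum>i<d. (\<pi> b - P i b) * f i) = 0"
      by (simp add: left_diff_distrib sum_subtractf)
    moreover have "\<forall>i<d. \<pi> b - P i b \<in> D"
    proof (intro allI impI)
      fix j assume "j < d"
      then have "P j b \<in> D" using P inD b by blast
      moreover have "\<pi> b \<in> D" using inD pa b by blast
      ultimately show "\<pi> b - P j b \<in> D" using minus by blast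
    qed
    moreover have LI: "\<forall>c. (\<forall>i<d. c i \<in> D) \<longrightarrow> (\<Sum>i<d. c i * f i) = 0 \<longrightarrow> (\<forall>i<d. c i = 0)"
      using assms(3) unfolding left_lin_indep_def .
    ultimately have "\<forall>i<d. \<pi> b - P i b = 0"
      using mp[OF mp[OF spec[OF LI, of "\<lambda>i. \<pi> b - P i b"]]] by blast
    then show ?thesis using i by simp
  qed
  have "\<forall>i<d. automorphic_wrt D \<pi> (f i)"
  proof (intro allI impI)
    fix i assume i: "i < d"
    show "automorphic_wrt D \<pi> (f i)" unfolding automorphic_wrt_def
    proof
      fix b assume b: "b \<in> D"
      have "f i * b = P i b * f i" using P[OF i] b unfolding automorphic_wrt_def by blast
      then show "f i * b = \<pi> b * f i" using eq[OF i b] by simp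
    qed
  qed
  then show "\<exists>\<pi>. ring_aut_on D \<pi> \<and> automorphic_wrt D \<pi> (\<Sum>i<d. f i) \<and>
              (\<forall>i<d. automorphic_wrt D \<pi> (f i))" using pa pw by blast
next
  assume "\<exists>\<pi>. ring_aut_on D \<pi> \<and> automorphic_wrt D \<pi> (\<Sum>i<d. f i) \<and>
              (\<forall>i<d. automorphic_wrt D \<pi> (f i))"
  then show "automorphic D (\<Sum>i<d. f i)" unfolding automorphic_def by blast
qed

end
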